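(* There exists $C>0$ such that for infinitely many positive integers $n$, there is a graph $G$ on $n$ vertices with $\alpha(G)\le 3$ such that every clique cover of $G$ has size at least $Cn^{6/5}/(\log n)^2$.
   Context: All graphs are finite and simple. $\alpha(G)$ denotes the maximum size of a stable (independent) set in $G$. A clique $X$ of $G$ covers an edge $uv$ if $u,v\in X$; a clique cover of $G$ is a collection of cliques of $G$ that together cover all edges of $G$, and its size is the number of cliques in it. Logarithms are to base two. *)

theory Defs
  imports Complex_Main
begin

definition simple_graph :: "'a set \<Rightarrow> 'a set set \<Rightarrow> bool" where
  "simple_graph V E \<longleftrightarrow> finite V \<and> (\<forall>e\<in>E. e \<subseteq> V \<and> card e = 2)"

definition is_clique :: "'a set \<Rightarrow> 'a set set \<Rightarrow> 'a set \<Rightarrow> bool" where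
  "is_clique V E X \<longleftrightarrow> X \<subseteq> V \<and> (\<forall>u\<in>X. \<forall>v\<in>X. u \<noteq> v \<longrightarrow> {u, v} \<in> E)"

definition is_stable :: "'a set \<Rightarrow> 'a set set \<Rightarrow> 'a set \<Rightarrow> bool" where
  "is_stable V E S \<longleftrightarrow> S \<subseteq> V \<and> (\<forall>u\<in>S. \<forall>v\<in>S. {u, v} \<notin> E)"

definition alpha :: "'a set \<Rightarrow> 'a set set \<Rightarrow> nat" where
  "alpha V E = Max {card S | S. is_stable V E S}"

definition is_clique_cover :: "'a set \<Rightarrow> 'a set set \<Rightarrow> 'a set set \<Rightarrow> bool" where
  "is_clique_cover V E \<C> \<longleftrightarrow> finite \<C> \<and> (\<forall>X\<in>\<C>. is_clique V E X) \<and>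
     (\<forall>e\<in>E. \<exists>X\<in>\<C>. e \<subseteq> X)"

end

theory Submission
  imports Defs
begin

definition wt :: "real \<Rightarrow> 'a set \<Rightarrow> 'a set \<Rightarrow> real" where
  "wt p D H = (\<Prod>e\<in>D. if e \<in> H then p else 1 - p)"

definition Pr :: "real \<Rightarrow> 'a set \<Rightarrow> 'a set set \<Rightarrow> real" where
  "Pr p D A = (\<Sum>H\<in>Pow D. if H \<in> A then wt p D H else 0)"

lemma wt_nonneg: "0 \<le> p \<Longrightarrow> p \<le> 1 \<Longrightarrow> 0 \<le> wt p D H"
  unfolding wt_def by (intro prod_nonneg) auto

lemma Pr_nonneg: "0 \<le> p \<Longrightarrow> p \<le> 1 \<Longrightarrow> 0 \<le> Pr p D A"
  unfolding Pr_def by (intro sum_nonneg) (auto intro: wt_nonneg)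

lemma Pr_mono: "0 \<le> p \<Longrightarrow> p \<le> 1 \<Longrightarrow> A \<subseteq> B \<Longrightarrow> Pr p D A \<le> Pr p D B"
  unfolding Pr_def by (intro sum_mono) (auto intro: wt_nonneg)

lemma Pr_diff: "Pr p D (A - B) = Pr p D A - Pr p D (A \<inter> B)"
  unfolding Pr_def by (simp add: sum_subtractf[symmetric]) (intro sum.cong, auto)

lemma wt_split:
  assumes "finite D" "X \<subseteq> D"
  shows "wt p D X = (\<Prod>e\<in>X. p) * (\<Prod>e\<in>D - X. 1 - p)"
proof -
  have "wt p D X = (\<Prod>e\<in>D - X. if e \<in> X then p else 1 - p) * (\<Prod>e\<in>X. if e \<in> X then p else 1 - p)"
    unfolding wt_def by (rule prod.subset_diff[OF assms(2,1)])
  also have "\<dots> = (\<Prod>e\<in>X. p) * (\<Prod>e\<in>D - X. 1 - p)"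
    by (simp only: mult.commute, intro arg_cong2[where f="(*)"] prod.cong) auto
  finally show ?thesis .
qed

lemma Pr_UNIV: assumes "finite D" shows "Pr p D UNIV = 1"
proof -
  have "(1::real) = (\<Prod>e\<in>D. p + (1 - p))" by simp
  also have "\<dots> = (\<Sum>X\<in>Pow D. (\<Prod>e\<in>X. p) * (\<Prod>e\<in>D - X. 1 - p))"
    by (rule prod_add[OF assms])
  also have "\<dots> = Pr p D UNIV" unfolding Pr_def
    using wt_split[OF assms] by (intro sum.cong) auto
  finally show ?thesis by simp
qed

lemma Pr_pos_ex: assumes "Pr p D A > 0" shows "\<exists>H. H \<subseteq> D \<and> H \<in> A"
proof (rule ccontr)
  assume "\<not> ?thesis"
  then have "Pr p D A = 0" unfolding Pr_def by (intro sum.neutral) auto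
  with assms show False by simp
qed

lemma wt_union:
  assumes "finite D" "D1 \<subseteq> D" "U \<subseteq> D1" "W \<subseteq> D - D1"
  shows "wt p D (U \<union> W) = wt p D1 U * wt p (D - D1) W"
proof -
  have fin: "finite D1" "finite (D - D1)" using assms finite_subset by auto
  have "wt p D (U \<union> W) = (\<Prod>e\<in>D1. if e \<in> U \<union> W then p else 1 - p) * (\<Prod>e\<in>D - D1. if e \<in> U \<union> W then p else 1 - p)"
    unfolding wt_def using assms prod.subset_diff[of D1 D] by (simp add: mult.commute)
  also have "(\<Prod>e\<in>D1. if e \<in> U \<union> W then p else 1 - p) = wt p D1 U"
    unfolding wt_def using assms by (intro prod.cong) auto
  also have "(\<Prod>e\<in>D - D1. if e \<in> U \<union> W then p else 1 - p) = wt p (D - D1) W"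
    unfolding wt_def using assms by (intro prod.cong) auto
  finally show ?thesis .
qed

lemma Pr_factor:
  assumes "finite D" "D1 \<subseteq> D"
    and detA: "\<And>H. H \<subseteq> D \<Longrightarrow> H \<in> A \<longleftrightarrow> H \<inter> D1 \<in> A"
    and detB: "\<And>H. H \<subseteq> D \<Longrightarrow> H \<in> B \<longleftrightarrow> H \<inter> (D - D1) \<in> B"
  shows "Pr p D (A \<inter> B) = Pr p D1 A * Pr p (D - D1) B"
proof -
  have fin: "finite D1" "finite (D - D1)" using assms finite_subset by auto
  have bij: "bij_betw (\<lambda>x. fst x \<union> snd x) (Pow D1 \<times> Pow (D - D1)) (Pow D)"
  proof (rule bij_betw_imageI)
    show "inj_on (\<lambda>x. fst x \<union> snd x) (Pow D1 \<times> Pow (D - D1))"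
      by (auto simp: inj_on_def)
    show "(\<lambda>x. fst x \<union> snd x) ` (Pow D1 \<times> Pow (D - D1)) = Pow D"
    proof
      show "(\<lambda>x. fst x \<union> snd x) ` (Pow D1 \<times> Pow (D - D1)) \<subseteq> Pow D" using assms by auto
      show "Pow D \<subseteq> (\<lambda>x. fst x \<union> snd x) ` (Pow D1 \<times> Pow (D - D1))"
      proof
        fix H assume "H \<in> Pow D"
        then have "H = (\<lambda>x. fst x \<union> snd x) (H \<inter> D1, H \<inter> (D - D1))" "(H \<inter> D1, H \<inter> (D - D1)) \<in> Pow D1 \<times> Pow (D - D1)"
          by auto
        then show "H \<in> (\<lambda>x. fst x \<union> snd x) ` (Pow D1 \<times> Pow (D - D1))" by blast
      qed
    qed
  qed
  have "Pr p D (A \<inter> B) = (\<Sum>H\<in>Pow D. if H \<in> A \<inter> B then wt p D H else 0)" unfolding Pr_def ..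
  also have "\<dots> = (\<Sum>x\<in>Pow D1 \<times> Pow (D - D1). if fst x \<union> snd x \<in> A \<inter> B then wt p D (fst x \<union> snd x) else 0)"
    using sum.reindex_bij_betw[OF bij, symmetric, of "\<lambda>H. if H \<in> A \<inter> B then wt p D H else 0"]
    by simp
  also have "\<dots> = (\<Sum>x\<in>Pow D1 \<times> Pow (D - D1). (if fst x \<in> A then wt p D1 (fst x) else 0) * (if snd x \<in> B then wt p (D - D1) (snd x) else 0))"
  proof (intro sum.cong refl)
    fix x assume x: "x \<in> Pow D1 \<times> Pow (D - D1)"
    obtain U W where xUW: "x = (U, W)" by (cases x)
    have UW: "U \<subseteq> D1" "W \<subseteq> D - D1" using x xUW by auto
    have s: "U \<union> W \<subseteq> D" using UW assms by auto
    have "(U \<union> W) \<inter> D1 = U" "(U \<union> W) \<inter> (D - D1) = W" using UW by auto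
    then have "U \<union> W \<in> A \<longleftrightarrow> U \<in> A" "U \<union> W \<in> B \<longleftrightarrow> W \<in> B" using detA[OF s] detB[OF s] by auto
    then show "(if fst x \<union> snd x \<in> A \<inter> B then wt p D (fst x \<union> snd x) else 0) = (if fst x \<in> A then wt p D1 (fst x) else 0) * (if snd x \<in> B then wt p (D - D1) (snd x) else 0)"
      using wt_union[OF assms(1,2) UW] xUW by auto
  qed
  also have "\<dots> = Pr p D1 A * Pr p (D - D1) B"
    unfolding Pr_def sum_product sum.cartesian_product by (simp add: case_prod_unfold)
  finally show ?thesis .
qed

lemma Pr_indep:
  assumes "finite D" "D1 \<subseteq> D"
    and detA: "\<And>H. H \<subseteq> D \<Longrightarrow> H \<in> A \<longleftrightarrow> H \<inter> D1 \<in> A"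
    and detB: "\<And>H. H \<subseteq> D \<Longrightarrow> H \<in> B \<longleftrightarrow> H \<inter> (D - D1) \<in> B"
  shows "Pr p D (A \<inter> B) = Pr p D A * Pr p D B"
    and "Pr p D A = Pr p D1 A"
proof -
  have fin: "finite D1" "finite (D - D1)" using assms finite_subset by auto
  have 1: "Pr p D A = Pr p D1 A"
    using Pr_factor[OF assms(1,2) detA, of UNIV p] Pr_UNIV[OF fin(2)] by simp
  have 2: "Pr p D B = Pr p (D - D1) B"
    using Pr_factor[OF assms(1,2), of UNIV B p] detB Pr_UNIV[OF fin(1)] by simp
  show "Pr p D (A \<inter> B) = Pr p D A * Pr p D B"
    using Pr_factor[OF assms] 1 2 by simp
  show "Pr p D A = Pr p D1 A" by (rule 1)
qed

lemma prod_le_subset: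
  fixes f :: "'i \<Rightarrow> real"
  assumes "finite T" "S \<subseteq> T" "\<And>j. j \<in> T \<Longrightarrow> 0 \<le> f j \<and> f j \<le> 1"
  shows "(\<Prod>j\<in>T. f j) \<le> (\<Prod>j\<in>S. f j)"
proof -
  have "(\<Prod>j\<in>T. f j) = (\<Prod>j\<in>T - S. f j) * (\<Prod>j\<in>S. f j)"
    by (rule prod.subset_diff[OF assms(2,1)])
  also have "\<dots> \<le> 1 * (\<Prod>j\<in>S. f j)"
    using assms by (intro mult_right_mono prod_le_1 prod_nonneg) auto
  finally show ?thesis by simp
qed

locale lll =
  fixes P :: "'b set \<Rightarrow> real" and A :: "'i \<Rightarrow> 'b set" and G :: "'i \<Rightarrow> 'i set"
    and x :: "'i \<Rightarrow> real" and J :: "'i set"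
  assumes finJ: "finite J"
    and mono: "\<And>X Y. X \<subseteq> Y \<Longrightarrow> P X \<le> P Y"
    and diff: "\<And>X Y. P (X - Y) = P X - P (X \<inter> Y)"
    and nonneg: "\<And>X. 0 \<le> P X"
    and univ: "P UNIV > 0"
    and xb: "\<And>i. i \<in> J \<Longrightarrow> 0 \<le> x i \<and> x i < 1"
    and GJ: "\<And>i. i \<in> J \<Longrightarrow> G i \<subseteq> J"
    and indep: "\<And>i S. i \<in> J \<Longrightarrow> S \<subseteq> J - G i - {i} \<Longrightarrow>
       P (A i \<inter> - \<Union>(A ` S)) = P (A i) * P (- \<Union>(A ` S))"
    and cond: "\<And>i. i \<in> J \<Longrightarrow> P (A i) \<le> x i * (\<Prod>j\<in>G i. 1 - x j)"
begin

definition B :: "'i set \<Rightarrow> 'b set" where "B S = - \<Union>(A ` S)"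

definition Q :: "'i set \<Rightarrow> bool" where
  "Q S \<longleftrightarrow> (\<forall>i\<in>J - S. P (A i \<inter> B S) \<le> x i * P (B S))"

lemma peel:
  assumes "finite U" "U \<subseteq> J" "R \<subseteq> J" "R \<inter> U = {}"
    and "\<And>T. R \<subseteq> T \<Longrightarrow> T \<subset> R \<union> U \<Longrightarrow> Q T"
  shows "P (B (R \<union> U)) \<ge> (\<Prod>j\<in>U. 1 - x j) * P (B R)"
  using assms
proof (induction U rule: finite_induct)
  case empty
  then show ?case by simp
next
  case (insert j U)
  have IH: "P (B (R \<union> U)) \<ge> (\<Prod>j\<in>U. 1 - x j) * P (B R)"
  proof (rule insert.IH)
    show "U \<subseteq> J" "R \<subseteq> J" "R \<inter> U = {}" using insert.prems by auto
    fix T assume "R \<subseteq> T" "T \<subset> R \<union> U"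
    then have "T \<subset> R \<union> insert j U" using insert.hyps by auto
    then show "Q T" using \<open>R \<subseteq> T\<close> insert.prems(4) by blast
  qed
  have QRU: "Q (R \<union> U)" using insert by (intro insert.prems(4)) auto
  have j: "j \<in> J - (R \<union> U)" using insert by auto
  have "B (R \<union> insert j U) = B (R \<union> U) - A j" unfolding B_def by auto
  then have eq: "P (B (R \<union> insert j U)) = P (B (R \<union> U)) - P (B (R \<union> U) \<inter> A j)"
    by (simp add: diff)
  have le: "P (B (R \<union> U) \<inter> A j) \<le> x j * P (B (R \<union> U))"
    using QRU j unfolding Q_def by (simp add: Int_commute)
  have "(1 - x j) * P (B (R \<union> U)) = P (B (R \<union> U)) - x j * P (B (R \<union> U))"
    by (simp add: algebra_simps)
  then have "P (B (R \<union> insert j U)) \<ge> (1 - x j) * P (B (R \<union> U))"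
    using eq le by linarith
  moreover have "(1 - x j) * P (B (R \<union> U)) \<ge> (1 - x j) * ((\<Prod>j\<in>U. 1 - x j) * P (B R))"
    using IH xb[of j] j by (intro mult_left_mono) auto
  ultimately show ?case using insert by (simp add: mult.assoc)
qed

lemma Q_all: "S \<subseteq> J \<Longrightarrow> Q S"
proof (induction "card S" arbitrary: S rule: less_induct)
  case less
  show ?case unfolding Q_def
  proof
    fix i assume i: "i \<in> J - S"
    define S1 where "S1 = S \<inter> G i"
    define S2 where "S2 = S - G i"
    have finS: "finite S" using less.prems finJ finite_subset by auto
    have S12: "S = S2 \<union> S1" "S2 \<inter> S1 = {}" unfolding S1_def S2_def by auto
    have "P (A i \<inter> B S) \<le> P (A i \<inter> B S2)"
      by (intro mono) (auto simp: B_def S2_def)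
    also have "\<dots> = P (A i) * P (B S2)"
      unfolding B_def using i less.prems by (intro indep) (auto simp: S2_def)
    also have "\<dots> \<le> (x i * (\<Prod>j\<in>G i. 1 - x j)) * P (B S2)"
      using cond[of i] i nonneg by (intro mult_right_mono) auto
    also have "\<dots> \<le> (x i * (\<Prod>j\<in>S1. 1 - x j)) * P (B S2)"
    proof -
      have "\<And>j. j \<in> G i \<Longrightarrow> 0 \<le> 1 - x j \<and> 1 - x j \<le> 1" using xb GJ i by force
      then have "(\<Prod>j\<in>G i. 1 - x j) \<le> (\<Prod>j\<in>S1. 1 - x j)"
        using GJ[of i] i finJ by (intro prod_le_subset) (auto simp: S1_def intro: finite_subset)
      then show ?thesis using xb[of i] i nonneg by (intro mult_right_mono mult_left_mono) auto
    qed
    also have "\<dots> \<le> x i * P (B S)"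
    proof -
      have "(\<Prod>j\<in>S1. 1 - x j) * P (B S2) \<le> P (B (S2 \<union> S1))"
      proof (rule peel)
        show "finite S1" using finS by (auto simp: S1_def)
        show "S1 \<subseteq> J" "S2 \<subseteq> J" "S2 \<inter> S1 = {}" using less.prems S12 by auto
        fix T assume "S2 \<subseteq> T" "T \<subset> S2 \<union> S1"
        then have "T \<subset> S" using S12 by auto
        then show "Q T" using less.prems finS by (intro less.hyps) (auto intro: psubset_card_mono)
      qed
      then show ?thesis using S12 xb[of i] i by (simp add: mult.assoc mult_left_mono)
    qed
    finally show "P (A i \<inter> B S) \<le> x i * P (B S)" .
  qed
qed

theorem lll_pos: "P (- \<Union>(A ` J)) > 0"
proof -
  have "P (B ({} \<union> J)) \<ge> (\<Prod>j\<in>J. 1 - x j) * P (B {})"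
    using finJ by (intro peel) (auto intro: Q_all)
  moreover have "(\<Prod>j\<in>J. 1 - x j) > 0" using xb by (intro prod_pos) auto
  moreover have "P (B {}) > 0" using univ by (simp add: B_def)
  ultimately have "P (B J) > 0" by (smt (verit) mult_pos_pos Un_empty_left)
  then show ?thesis by (simp add: B_def)
qed

end

definition prs :: "'a set \<Rightarrow> 'a set set" where "prs Q = {e. e \<subseteq> Q \<and> card e = 2}"

lemma card_prs: "finite Q \<Longrightarrow> card (prs Q) = card Q choose 2"
  unfolding prs_def by (rule n_subsets)

lemma finite_prs: "finite Q \<Longrightarrow> finite (prs Q)"
  unfolding prs_def by (rule finite_subset[of _ "Pow Q"]) auto

lemma prs_mono: "Q \<subseteq> Q' \<Longrightarrow> prs Q \<subseteq> prs Q'"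
  unfolding prs_def by auto

lemma prs_disj:
  assumes "finite Q" "card (Q \<inter> Q') < 2" shows "prs Q \<inter> prs Q' = {}"
proof (rule ccontr)
  assume "prs Q \<inter> prs Q' \<noteq> {}"
  then obtain e where "e \<subseteq> Q \<inter> Q'" "card e = 2" unfolding prs_def by auto
  then have "2 \<le> card (Q \<inter> Q')" using assms(1) by (metis card_mono finite_Int)
  with assms show False by simp
qed

lemma count4:
  assumes "finite V" "X \<subseteq> V"
  shows "card {Q. Q \<subseteq> V \<and> card Q = 4 \<and> 2 \<le> card (Q \<inter> X)} \<le> card X ^ 2 * card V ^ 2"
proof -
  have finX: "finite X" using assms finite_subset by auto
  have sub: "{Q. Q \<subseteq> V \<and> card Q = 4 \<and> 2 \<le> card (Q \<inter> X)} \<subseteq>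
      (\<lambda>(a,b,c,d). {a,b,c,d}) ` (X \<times> X \<times> V \<times> V)"
  proof
    fix Q assume "Q \<in> {Q. Q \<subseteq> V \<and> card Q = 4 \<and> 2 \<le> card (Q \<inter> X)}"
    then have Q: "Q \<subseteq> V" "card Q = 4" "2 \<le> card (Q \<inter> X)" by auto
    have finQ: "finite Q" using Q assms finite_subset by auto
    obtain S where S: "S \<subseteq> Q \<inter> X" "card S = 2"
      using obtain_subset_with_card_n[OF Q(3)] by blast
    then obtain a b where ab: "S = {a, b}" "a \<noteq> b" by (auto simp: card_2_iff)
    have "S \<subseteq> Q" "finite S" using S finQ finite_subset by auto
    then have "card (Q - S) = 2" using S Q by (simp add: card_Diff_subset)
    then obtain c d where cd: "Q - S = {c, d}" by (auto simp: card_2_iff)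
    have "Q = {a,b,c,d}" using cd ab S by auto
    moreover have "(a,b,c,d) \<in> X \<times> X \<times> V \<times> V" using ab S cd Q by auto
    ultimately show "Q \<in> (\<lambda>(a,b,c,d). {a,b,c,d}) ` (X \<times> X \<times> V \<times> V)" by force
  qed
  have "card {Q. Q \<subseteq> V \<and> card Q = 4 \<and> 2 \<le> card (Q \<inter> X)} \<le> card ((\<lambda>(a,b,c,d). {a,b,c,d}) ` (X \<times> X \<times> V \<times> V))"
    using assms finX by (intro card_mono[OF _ sub]) auto
  also have "\<dots> \<le> card (X \<times> X \<times> V \<times> V)" by (rule card_image_le) (use assms finX in auto)
  also have "\<dots> = card X ^ 2 * card V ^ 2" by (simp add: card_cartesian_product power2_eq_square)
  finally show ?thesis .
qed

definition Ev :: "'a set \<Rightarrow> 'a set set set" where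
  "Ev Q = (if card Q = 4 then {H. prs Q \<subseteq> H} else {H. prs Q \<inter> H = {}})"

lemma Ev_det: "H \<inter> prs Q = H' \<inter> prs Q \<Longrightarrow> H \<in> Ev Q \<longleftrightarrow> H' \<in> Ev Q"
  unfolding Ev_def by auto

lemma Ev_det2: "H \<in> Ev Q \<longleftrightarrow> H \<inter> prs Q \<in> Ev Q"
  by (rule Ev_det) auto

lemma Pr_Ev:
  assumes "finite I" "finite Q" "prs Q \<subseteq> I"
  shows "Pr p I (Ev Q) = (if card Q = 4 then p ^ (card Q choose 2) else (1 - p) ^ (card Q choose 2))"
proof -
  have fin: "finite (prs Q)" using finite_prs[OF assms(2)] .
  have "Pr p I (Ev Q) = Pr p (prs Q) (Ev Q)"
    by (rule Pr_indep(2)[OF assms(1,3), of "Ev Q" UNIV]) (rule Ev_det2, simp)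
  also have "\<dots> = (if card Q = 4 then p ^ (card Q choose 2) else (1 - p) ^ (card Q choose 2))"
  proof (cases "card Q = 4")
    case True
    have "Pr p (prs Q) (Ev Q) = (\<Sum>H\<in>Pow (prs Q). if H = prs Q then wt p (prs Q) H else 0)"
      unfolding Pr_def Ev_def using True by (intro sum.cong) auto
    also have "\<dots> = wt p (prs Q) (prs Q)" using fin by (simp add: sum.delta')
    also have "\<dots> = p ^ card (prs Q)" unfolding wt_def by simp
    finally show ?thesis using True card_prs[OF assms(2)] by simp
  next
    case False
    have "Pr p (prs Q) (Ev Q) = (\<Sum>H\<in>Pow (prs Q). if H = {} then wt p (prs Q) H else 0)"
      unfolding Pr_def Ev_def using False by (intro sum.cong) auto
    also have "\<dots> = wt p (prs Q) {}" using fin by (simp add: sum.delta')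
    also have "\<dots> = (1 - p) ^ card (prs Q)" unfolding wt_def by simp
    finally show ?thesis using False card_prs[OF assms(2)] by simp
  qed
  finally show ?thesis .
qed

lemma ramsey_graph:
  fixes n k :: nat and p x4 y :: real
  assumes k4: "k \<noteq> 4" and p: "0 \<le> p" "p \<le> 1" and x4: "0 \<le> x4" "x4 < 1" and y: "0 \<le> y" "y < 1"
    and c1: "p ^ 6 \<le> x4 * (1 - x4) ^ (16 * n ^ 2) * (1 - y) ^ (n choose k)"
    and c2: "(1 - p) ^ (k choose 2) \<le> y * (1 - x4) ^ (k ^ 2 * n ^ 2) * (1 - y) ^ (n choose k)"
  shows "\<exists>H \<subseteq> prs {..<n}. (\<forall>Q \<subseteq> {..<n}. card Q = 4 \<longrightarrow> \<not> prs Q \<subseteq> H) \<and>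
            (\<forall>Q \<subseteq> {..<n}. card Q = k \<longrightarrow> prs Q \<inter> H \<noteq> {})"
proof -
  define V :: "nat set" where "V = {..<n}"
  define I where "I = prs V"
  define J where "J = {Q. Q \<subseteq> V \<and> (card Q = 4 \<or> card Q = k)}"
  define G where "G = (\<lambda>Q. {Q'\<in>J. 2 \<le> card (Q \<inter> Q')})"
  define xx where "xx = (\<lambda>Q::nat set. if card Q = 4 then x4 else y)"
  have finV: "finite V" and cardV: "card V = n" by (auto simp: V_def)
  have finI: "finite I" unfolding I_def by (rule finite_prs[OF finV])
  have finJ: "finite J" unfolding J_def by (rule finite_subset[of _ "Pow V"]) (use finV in auto)
  have xxb: "\<And>Q. 0 \<le> 1 - xx Q \<and> 1 - xx Q \<le> 1" using x4 y by (auto simp: xx_def)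
  interpret lll "Pr p I" Ev G xx J
  proof
    show "finite J" by (rule finJ)
    show "\<And>X Y. X \<subseteq> Y \<Longrightarrow> Pr p I X \<le> Pr p I Y" using p by (rule Pr_mono)
    show "\<And>X Y. Pr p I (X - Y) = Pr p I X - Pr p I (X \<inter> Y)" by (rule Pr_diff)
    show "\<And>X. 0 \<le> Pr p I X" using p by (rule Pr_nonneg)
    show "0 < Pr p I UNIV" using Pr_UNIV[OF finI] by simp
    show "\<And>i. i \<in> J \<Longrightarrow> 0 \<le> xx i \<and> xx i < 1" using x4 y by (auto simp: xx_def)
    show "\<And>i. i \<in> J \<Longrightarrow> G i \<subseteq> J" by (auto simp: G_def)
  next
    fix i S assume i: "i \<in> J" and S: "S \<subseteq> J - G i - {i}"
    have fini: "finite i" using i finV finite_subset by (auto simp: J_def)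
    have "i \<subseteq> V" using i by (auto simp: J_def)
    then have prsI: "prs i \<subseteq> I" using prs_mono unfolding I_def by blast
    show "Pr p I (Ev i \<inter> - \<Union> (Ev ` S)) = Pr p I (Ev i) * Pr p I (- \<Union> (Ev ` S))"
    proof (rule Pr_indep(1)[OF finI prsI])
      fix H :: "nat set set" assume "H \<subseteq> I"
      show "H \<in> Ev i \<longleftrightarrow> H \<inter> prs i \<in> Ev i" by (rule Ev_det) auto
    next
      fix H :: "nat set set" assume HI: "H \<subseteq> I"
      have "\<And>Q'. Q' \<in> S \<Longrightarrow> H \<in> Ev Q' \<longleftrightarrow> H \<inter> (I - prs i) \<in> Ev Q'"
      proof -
        fix Q' assume Q': "Q' \<in> S"
        then have "card (i \<inter> Q') < 2" "Q' \<in> J" using S by (auto simp: G_def)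
        then have d: "prs i \<inter> prs Q' = {}" using prs_disj[OF fini] by auto
        have "Q' \<subseteq> V" using \<open>Q' \<in> J\<close> by (auto simp: J_def)
        then have "prs Q' \<subseteq> I" using prs_mono unfolding I_def by blast
        then have "H \<inter> prs Q' = (H \<inter> (I - prs i)) \<inter> prs Q'" using d by auto
        then show "H \<in> Ev Q' \<longleftrightarrow> H \<inter> (I - prs i) \<in> Ev Q'" by (rule Ev_det)
      qed
      then show "H \<in> - \<Union> (Ev ` S) \<longleftrightarrow> H \<inter> (I - prs i) \<in> - \<Union> (Ev ` S)" by auto
    qed
  next
    fix i assume i: "i \<in> J"
    have iV: "i \<subseteq> V" using i by (auto simp: J_def)
    have fini: "finite i" using iV finV finite_subset by auto
    have prsI: "prs i \<subseteq> I" using iV prs_mono unfolding I_def by blast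
    define G4 where "G4 = {Q'. Q' \<subseteq> V \<and> card Q' = 4 \<and> 2 \<le> card (Q' \<inter> i)}"
    define Gk where "Gk = {Q'. Q' \<subseteq> V \<and> card Q' = k}"
    have finG4: "finite G4" unfolding G4_def by (rule finite_subset[of _ "Pow V"]) (use finV in auto)
    have finGk: "finite Gk" unfolding Gk_def by (rule finite_subset[of _ "Pow V"]) (use finV in auto)
    have GiG: "G i \<subseteq> G4 \<union> Gk"
    proof
      fix Q' assume "Q' \<in> G i"
      then have Q': "Q' \<subseteq> V" "card Q' = 4 \<or> card Q' = k" "2 \<le> card (i \<inter> Q')"
        unfolding G_def J_def by auto
      have "card (Q' \<inter> i) = card (i \<inter> Q')" by (simp only: Int_commute)
      then show "Q' \<in> G4 \<union> Gk" using Q' unfolding G4_def Gk_def by auto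
    qed
    have dis: "G4 \<inter> Gk = {}" using k4 by (auto simp: G4_def Gk_def)
    have cG4: "card G4 \<le> card i ^ 2 * n ^ 2" unfolding G4_def cardV[symmetric] by (rule count4[OF finV iV])
    have cGk: "card Gk = n choose k" unfolding Gk_def cardV[symmetric] by (rule n_subsets[OF finV])
    have le1: "(\<Prod>j\<in>G4 \<union> Gk. 1 - xx j) \<le> (\<Prod>j\<in>G i. 1 - xx j)"
      by (rule prod_le_subset) (use finG4 finGk GiG xxb in auto)
    have e1: "(\<Prod>j\<in>G4 \<union> Gk. 1 - xx j) = (\<Prod>j\<in>G4. 1 - xx j) * (\<Prod>j\<in>Gk. 1 - xx j)"
      using finG4 finGk dis by (rule prod.union_disjoint)
    have e2: "(\<Prod>j\<in>G4. 1 - xx j) = (\<Prod>j\<in>G4. 1 - x4)"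
      by (rule prod.cong) (auto simp: G4_def xx_def)
    have e3: "(\<Prod>j\<in>Gk. 1 - xx j) = (\<Prod>j\<in>Gk. 1 - y)"
      by (rule prod.cong) (use k4 in \<open>auto simp: Gk_def xx_def\<close>)
    have pb: "(1 - x4) ^ card G4 * (1 - y) ^ card Gk \<le> (\<Prod>j\<in>G i. 1 - xx j)"
      using le1 unfolding e1 e2 e3 by simp
    have "(1 - x4) ^ (card i ^ 2 * n ^ 2) \<le> (1 - x4) ^ card G4"
      using cG4 x4 by (intro power_decreasing) auto
    then have "(1 - x4) ^ (card i ^ 2 * n ^ 2) * (1 - y) ^ card Gk \<le> (1 - x4) ^ card G4 * (1 - y) ^ card Gk"
      using y by (intro mult_right_mono) auto
    then have prodb: "(1 - x4) ^ (card i ^ 2 * n ^ 2) * (1 - y) ^ (n choose k) \<le> (\<Prod>j\<in>G i. 1 - xx j)"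
      using pb cGk by simp
    have PE: "Pr p I (Ev i) = (if card i = 4 then p ^ (card i choose 2) else (1 - p) ^ (card i choose 2))"
      by (rule Pr_Ev[OF finI fini prsI])
    show "Pr p I (Ev i) \<le> xx i * (\<Prod>j\<in>G i. 1 - xx j)"
    proof (cases "card i = 4")
      case True
      have "Pr p I (Ev i) = p ^ 6" using PE True by (simp add: choose_two)
      also have "\<dots> \<le> x4 * ((1 - x4) ^ (card i ^ 2 * n ^ 2) * (1 - y) ^ (n choose k))"
        using c1 True by (simp only: mult.assoc) simp
      also have "\<dots> \<le> x4 * (\<Prod>j\<in>G i. 1 - xx j)"
        using x4 by (intro mult_left_mono[OF prodb]) auto
      also have "\<dots> = xx i * (\<Prod>j\<in>G i. 1 - xx j)"
        using True by (simp add: xx_def)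
      finally show ?thesis .
    next
      case False
      then have ck: "card i = k" using i by (auto simp: J_def)
      have "Pr p I (Ev i) = (1 - p) ^ (k choose 2)" using PE False ck by simp
      also have "\<dots> \<le> y * ((1 - x4) ^ (card i ^ 2 * n ^ 2) * (1 - y) ^ (n choose k))"
        using c2 ck by (simp only: mult.assoc)
      also have "\<dots> \<le> y * (\<Prod>j\<in>G i. 1 - xx j)"
        using y by (intro mult_left_mono[OF prodb]) auto
      also have "\<dots> = xx i * (\<Prod>j\<in>G i. 1 - xx j)"
        using False by (simp add: xx_def)
      finally show ?thesis .
    qed
  qed
  have pos: "Pr p I (- \<Union> (Ev ` J)) > 0" by (rule lll_pos)
  obtain H where H0: "H \<subseteq> I \<and> H \<in> - \<Union> (Ev ` J)"
    using Pr_pos_ex[OF pos] by iprover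
  have H: "H \<subseteq> I" "H \<in> - \<Union> (Ev ` J)" using H0 by simp_all
  show ?thesis
  proof (intro exI[of _ H] conjI allI impI)
    show "H \<subseteq> prs {..<n}" using H by (simp add: I_def V_def)
  next
    fix Q assume "Q \<subseteq> {..<n}" "card Q = 4"
    then have "Q \<in> J" by (simp add: J_def V_def)
    then have "H \<notin> Ev Q" using H by auto
    then show "\<not> prs Q \<subseteq> H" using \<open>card Q = 4\<close> by (simp add: Ev_def)
  next
    fix Q assume "Q \<subseteq> {..<n}" "card Q = k"
    then have "Q \<in> J" by (simp add: J_def V_def)
    then have "H \<notin> Ev Q" using H by auto
    then show "prs Q \<inter> H \<noteq> {}" using \<open>card Q = k\<close> k4 by (simp add: Ev_def)
  qed
qed

lemma exp_m2_le: fixes t :: real assumes "0 \<le> t" "t \<le> 1/2" shows "exp (-2 * t) \<le> 1 - t"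
proof -
  have "1 + 2 * t \<le> exp (2 * t)" using exp_ge_add_one_self[of "2*t"] by simp
  then have "exp (-2 * t) \<le> 1 / (1 + 2 * t)"
    using assms by (simp add: exp_minus field_simps)
  also have "\<dots> \<le> 1 - t"
  proof -
    have "t * (2 * t) \<le> t * 1" using assms by (intro mult_left_mono) auto
    then have "1 \<le> (1 - t) * (1 + 2 * t)" by (simp add: algebra_simps)
    then show ?thesis using assms by (simp add: field_simps)
  qed
  finally show ?thesis .
qed

lemma ln4_le2: "ln (4::real) \<le> 2"
proof -
  have "ln (2::real) \<le> 1"
  proof -
    have "(2::real) \<le> exp 1" using exp_ge_add_one_self[of 1] by simp
    then have "ln (2::real) \<le> ln (exp 1)" by (subst ln_le_cancel_iff) auto
    then show ?thesis by simp
  qed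
  moreover have "ln (4::real) = ln 2 + ln 2" using ln_mult[of 2 2] by simp
  ultimately show ?thesis by simp
qed

lemma num_c2:
  fixes s L K :: real
  assumes s: "s \<ge> 2" and L: "L \<ge> 1" and K: "K \<ge> 16 * s * L"
  shows "ln 4 - K * (K - 1) / (4 * s) \<le> - K * L - K ^ 2 / (8 * s)"
proof -
  have sL1: "s * 1 \<le> s * L" using L s by (intro mult_left_mono) auto
  then have sL: "s * L \<ge> 2" using s by linarith
  have K0: "K \<ge> 0" using K sL by simp
  have h1: "K * K \<ge> (16 * s * L) * K" using K K0 by (intro mult_right_mono) auto
  have h3: "(s * L) * K \<ge> 2 * K" using sL K0 by (intro mult_right_mono) auto
  have h4: "ln 4 \<le> (2::real)" by (rule ln4_le2)
  have h5: "s * ln 4 \<le> s * 2" using h4 s by (intro mult_left_mono) auto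
  have Ks: "K \<ge> 16 * s" using K sL1 by linarith
  define m where "m = (s * L) * K"
  have h1': "K * K \<ge> 16 * m" using h1 unfolding m_def by (simp add: algebra_simps)
  have h3': "m \<ge> 2 * K" using h3 unfolding m_def by simp
  have "K * K - 2 * K - 8 * m - 8 * (s * ln 4) \<ge> 0"
    using h1' h3' h5 Ks s by linarith
  then have key: "K * K - 2 * K - 8 * (s * L) * K - 8 * (s * ln 4) \<ge> 0"
    unfolding m_def by (simp add: algebra_simps)
  have "(- K * L - K ^ 2 / (8 * s)) - (ln 4 - K * (K - 1) / (4 * s))
        = (K * K - 2 * K - 8 * (s * L) * K - 8 * (s * ln 4)) / (8 * s)"
    using s by (simp add: field_simps power2_eq_square)
  also have "\<dots> \<ge> 0" using key s by simp
  finally show ?thesis by simp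
qed

lemma choose2_real: "real (k choose 2) = real k * (real k - 1) / 2"
proof -
  have "2 * (k choose 2) = k * ((k - 1) choose 1)" using times_binomial_minus1_eq[of 2 k] by simp
  then have "2 * (k choose 2) = k * (k - 1)" by simp
  then have "2 * real (k choose 2) = real k * real (k - 1)" by (metis of_nat_mult of_nat_numeral)
  moreover have "real k * real (k - 1) = real k * (real k - 1)"
    by (cases "k = 0") (auto simp: of_nat_diff)
  ultimately show ?thesis by linarith
qed

lemma exp_aux: "exp (a + b - ln 4) = (exp a / 2) * exp b * (1/2 :: real)"
  by (simp add: exp_diff exp_add)

lemma choose_le_pow_real: "real (n choose k) \<le> real n ^ k"
proof (cases "k \<le> n")
  case True
  then have "n choose k \<le> n ^ k" by (rule binomial_le_pow)
  then show ?thesis by (metis of_nat_le_iff of_nat_power)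
next
  case False
  then show ?thesis by (simp add: binomial_eq_0)
qed

lemma conds:
  fixes n :: nat and s L p x4 y :: real and k :: nat
  assumes n8: "n \<ge> 8"
    and s_def: "s = real n powr (2/5)" and L_def: "L = ln (real n)" and k_def: "k = nat \<lceil>16 * s * L\<rceil>"
    and p_def: "p = 1 / (2 * s)" and x4_def: "x4 = 4 * p ^ 6" and y_def: "y = 1 / (2 * real n ^ k)"
  shows "s \<ge> 2" "L \<ge> 1" "k \<noteq> 4" "real k \<le> 17 * s * L" "0 \<le> p" "p \<le> 1" "0 \<le> x4" "x4 < 1" "0 \<le> y" "y < 1"
    "p ^ 6 \<le> x4 * (1 - x4) ^ (16 * n ^ 2) * (1 - y) ^ (n choose k)"
    "(1 - p) ^ (k choose 2) \<le> y * (1 - x4) ^ (k ^ 2 * n ^ 2) * (1 - y) ^ (n choose k)"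
proof -
  have npos: "real n > 0" using n8 by simp
  have n8r: "real n \<ge> 8" using n8 by simp
  have s5: "s ^ 5 = real n ^ 2"
  proof -
    have "s ^ 5 = real n powr (real 5 * (2/5))" unfolding s_def using npos by (intro powr_power) auto
    also have "\<dots> = real n powr 2" by simp
    also have "\<dots> = real n ^ 2" using npos by simp
    finally show ?thesis .
  qed
  have spos: "s > 0" unfolding s_def using npos by simp
  show s2: "s \<ge> 2"
  proof (rule ccontr)
    assume "\<not> s \<ge> 2"
    then have "s ^ 5 < 2 ^ 5" using spos by (intro power_strict_mono) auto
    moreover have "real n ^ 2 \<ge> 8 ^ 2" using n8r by (intro power_mono) auto
    ultimately show False using s5 by simp
  qed
  show L1: "L \<ge> 1"
  proof -
    have "exp 1 \<le> real n" using exp_le n8r by simp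
    then show ?thesis unfolding L_def using ln_ge_iff[OF npos] by simp
  qed
  have sL1: "s * 1 \<le> s * L" using L1 spos by (intro mult_left_mono) auto
  have sL: "s * L \<ge> 2" using sL1 s2 by linarith
  have Kge: "16 * s * L \<le> real k" unfolding k_def by (rule real_nat_ceiling_ge)
  have h16: "0 \<le> 16 * s * L" using sL by linarith
  have "real k = real_of_int \<lceil>16 * s * L\<rceil>" unfolding k_def
    by (intro of_nat_nat) (use ceiling_mono[OF h16] in simp)
  then have "real k \<le> 16 * s * L + 1" using of_int_ceiling_le_add_one[of "16 * s * L"] by linarith
  then show "real k \<le> 17 * s * L" using sL by linarith
  have k32: "real k \<ge> 32" using Kge sL by linarith
  then show "k \<noteq> 4" by auto
  show p0: "0 \<le> p" unfolding p_def using spos by simp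
  have p14: "p \<le> 1/4" unfolding p_def using s2 by (simp add: field_simps)
  then show p1: "p \<le> 1" by simp
  have p6n2: "p ^ 6 * real n ^ 2 = 1 / (64 * s)"
  proof -
    have "p ^ 6 = 1 / (64 * s ^ 6)" unfolding p_def by (simp add: power_divide power_mult_distrib)
    then have "p ^ 6 * real n ^ 2 = s ^ 5 / (64 * s ^ 6)" using s5 by simp
    also have "\<dots> = 1 / (64 * s)" using spos by (simp add: field_simps eval_nat_numeral)
    finally show ?thesis .
  qed
  show x40: "0 \<le> x4" unfolding x4_def using p0 by simp
  have "p ^ 6 \<le> (1/4) ^ 6" using p0 p14 by (intro power_mono) auto
  moreover have "(1/4::real) ^ 6 = 1/4096" by (simp add: power_divide)
  ultimately have x4s: "x4 \<le> 4 / 4096" unfolding x4_def by simp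
  then show x41: "x4 < 1" by linarith
  have x4h: "x4 \<le> 1/2" using x4s by linarith
  have nk1: "real n ^ k \<ge> 1" using n8r by (intro one_le_power) auto
  show y0: "0 \<le> y" unfolding y_def using nk1 by simp
  have yh: "y \<le> 1/2" unfolding y_def using nk1 by (simp add: divide_le_eq)
  then show "y < 1" by simp
  have yM: "(1 - y) ^ (n choose k) \<ge> 1/2"
  proof -
    have "1 + real (n choose k) * (- y) \<le> (1 + - y) ^ (n choose k)"
      using yh by (intro Bernoulli_inequality) auto
    moreover have "real (n choose k) * y \<le> real n ^ k * y"
      using choose_le_pow_real y0 by (intro mult_right_mono) auto
    moreover have "real n ^ k * y = 1/2" unfolding y_def using nk1 n8 by simp
    ultimately show ?thesis by simp
  qed
  have A1: "(1 - x4) ^ (16 * n ^ 2) \<ge> 1/2"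
  proof -
    have "1 + real (16 * n ^ 2) * (- x4) \<le> (1 + - x4) ^ (16 * n ^ 2)"
      using x41 x40 by (intro Bernoulli_inequality) auto
    moreover have "real (16 * n ^ 2) * x4 = 64 * (p ^ 6 * real n ^ 2)" unfolding x4_def by simp
    moreover have "64 * (p ^ 6 * real n ^ 2) = 1 / s" using p6n2 by simp
    moreover have "1 / s \<le> 1 / 2" using s2 by (intro divide_left_mono) auto
    ultimately show ?thesis by simp
  qed
  have "p ^ 6 = x4 * (1/2) * (1/2)" unfolding x4_def by simp
  also have "\<dots> \<le> x4 * (1 - x4) ^ (16 * n ^ 2) * (1 - y) ^ (n choose k)"
    using A1 yM x40 by (intro mult_mono mult_left_mono) auto
  finally show "p ^ 6 \<le> x4 * (1 - x4) ^ (16 * n ^ 2) * (1 - y) ^ (n choose k)" .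
  define K where "K = real k"
  define N where "N = k ^ 2 * n ^ 2"
  have lhs: "(1 - p) ^ (k choose 2) \<le> exp (real (k choose 2) * (- p))"
  proof -
    have "(1 - p) ^ (k choose 2) \<le> exp (- p) ^ (k choose 2)"
      using exp_ge_add_one_self[of "- p"] p1 by (intro power_mono) auto
    then show ?thesis by (simp only: exp_of_nat_mult)
  qed
  have xN: "(1 - x4) ^ N \<ge> exp (real N * (- 2 * x4))"
  proof -
    have "exp (- 2 * x4) ^ N \<le> (1 - x4) ^ N"
      using exp_m2_le[OF x40 x4h] by (intro power_mono) auto
    then show ?thesis by (simp only: exp_of_nat_mult)
  qed
  have yexp: "y = exp (- (K * L)) / 2"
  proof -
    have "real n ^ k = exp (L) ^ k" unfolding L_def using npos by simp
    also have "\<dots> = exp (K * L)" unfolding K_def by (simp add: exp_of_nat_mult)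
    finally show ?thesis unfolding y_def by (simp add: exp_minus field_simps)
  qed
  have key: "real (k choose 2) * (- p) \<le> - (K * L) + real N * (- 2 * x4) - ln 4"
  proof -
    have nc: "ln 4 - K * (K - 1) / (4 * s) \<le> - K * L - K ^ 2 / (8 * s)"
      using num_c2[OF s2 L1] Kge unfolding K_def by simp
    have e1: "real (k choose 2) * (- p) = - (K * (K - 1) / (4 * s))"
      unfolding choose2_real K_def p_def using spos by (simp add: field_simps)
    have e2: "real N * (- 2 * x4) = - (K ^ 2 / (8 * s))"
    proof -
      have "real N * (- 2 * x4) = - (8 * K ^ 2 * (p ^ 6 * real n ^ 2))"
        unfolding N_def x4_def K_def by (simp add: algebra_simps)
      also have "\<dots> = - (K ^ 2 / (8 * s))" using p6n2 spos by (simp add: field_simps)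
      finally show ?thesis .
    qed
    show ?thesis using nc e1 e2 by linarith
  qed
  have "(1 - p) ^ (k choose 2) \<le> exp (- (K * L) + real N * (- 2 * x4) - ln 4)"
  proof -
    have "exp (real (k choose 2) * (- p)) \<le> exp (- (K * L) + real N * (- 2 * x4) - ln 4)"
      using key by (simp only: exp_le_cancel_iff)
    then show ?thesis by (rule order_trans[OF lhs])
  qed
  also have "\<dots> = (exp (- (K * L)) / 2) * exp (real N * (- 2 * x4)) * (1/2)"
    by (rule exp_aux)
  also have "\<dots> \<le> y * (1 - x4) ^ N * (1 - y) ^ (n choose k)"
    unfolding yexp[symmetric] using xN yM y0 x41
    by (intro mult_mono) (auto intro: mult_nonneg_nonneg)
  finally show "(1 - p) ^ (k choose 2) \<le> y * (1 - x4) ^ (k ^ 2 * n ^ 2) * (1 - y) ^ (n choose k)"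
    unfolding N_def .
qed

lemma final_num:
  fixes n c K s L :: real
  assumes n8: "n \<ge> 8" and s_def: "s = n powr (2/5)" and L_def: "L = ln n" and L1: "L \<ge> 1"
    and K0: "0 \<le> K" and Kle: "K \<le> 17 * s * L" and main: "(n / 4) ^ 4 \<le> c * K ^ 2 * n ^ 2"
  shows "(1/73984) * n powr (6/5) / (log 2 n) ^ 2 \<le> c"
proof -
  have npos: "n > 0" using n8 by simp
  have spos: "s > 0" unfolding s_def using npos by simp
  have Lpos: "L > 0" using L1 by simp
  have n4pos: "(n / 4) ^ 4 > 0" using npos by simp
  have c0: "c \<ge> 0"
  proof (rule ccontr)
    assume "\<not> c \<ge> 0"
    then have "c * (K ^ 2 * n ^ 2) \<le> 0" by (intro mult_nonpos_nonneg) auto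
    then show False using main n4pos by (simp add: mult.assoc)
  qed
  have "K ^ 2 \<le> (17 * s * L) ^ 2" using K0 Kle by (intro power_mono) auto
  then have "c * K ^ 2 * n ^ 2 \<le> c * (17 * s * L) ^ 2 * n ^ 2"
    using c0 by (intro mult_right_mono mult_left_mono) auto
  with main have m2: "(n / 4) ^ 4 \<le> c * (17 * s * L) ^ 2 * n ^ 2" by linarith
  have eq1: "(n / 4) ^ 4 = (n ^ 2 / 256) * n ^ 2" by (simp add: power_divide eval_nat_numeral)
  have eq2: "c * (17 * s * L) ^ 2 * n ^ 2 = (c * (289 * s ^ 2 * L ^ 2)) * n ^ 2"
    by (simp add: power_mult_distrib)
  have m3: "n ^ 2 / 256 \<le> c * (289 * s ^ 2 * L ^ 2)"
    by (rule mult_right_le_imp_le[OF m2[unfolded eq1 eq2]]) (use npos in simp)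
  have s2: "s ^ 2 = n powr (4/5)" unfolding s_def using npos by (simp add: powr_power)
  have p65: "n powr (6/5) = n ^ 2 / s ^ 2"
  proof -
    have "n powr (6/5) * n powr (4/5) = n powr 2" by (simp add: powr_add[symmetric])
    then have "n powr (6/5) * s ^ 2 = n ^ 2" unfolding s2 using npos by simp
    then show ?thesis using spos by (simp add: field_simps)
  qed
  have m4: "n powr (6/5) / (73984 * L ^ 2) \<le> c"
  proof -
    have "n powr (6/5) / (73984 * L ^ 2) = (n ^ 2 / 256) / (289 * s ^ 2 * L ^ 2)"
      unfolding p65 using spos Lpos by (simp add: field_simps)
    also have "\<dots> \<le> c" using m3 spos Lpos by (simp add: divide_le_eq mult.commute)
    finally show ?thesis .
  qed
  have Llog: "L \<le> log 2 n"
  proof -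
    have l2: "ln (2::real) \<le> 1"
    proof -
      have "(2::real) \<le> exp 1" using exp_ge_add_one_self[of 1] by simp
      then have "ln (2::real) \<le> ln (exp 1)" by (subst ln_le_cancel_iff) auto
      then show ?thesis by simp
    qed
    have l2p: "ln (2::real) > 0" by simp
    have "L * ln 2 \<le> L * 1" using l2 Lpos by (intro mult_left_mono) auto
    then have "L \<le> L / ln 2" using l2p by (simp add: le_divide_eq)
    then show ?thesis unfolding log_def L_def by simp
  qed
  have "L ^ 2 \<le> (log 2 n) ^ 2" using Llog Lpos by (intro power_mono) auto
  moreover have "0 < L ^ 2 * (log 2 n) ^ 2" using Llog Lpos by simp
  ultimately have "n powr (6/5) / (73984 * (log 2 n) ^ 2) \<le> n powr (6/5) / (73984 * L ^ 2)"
    using Lpos by (intro divide_left_mono) auto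
  with m4 have "n powr (6/5) / (73984 * (log 2 n) ^ 2) \<le> c" by linarith
  then show ?thesis by simp
qed

lemma main_n:
  fixes n :: nat
  assumes n8: "n \<ge> 8"
  shows "\<exists>E :: nat set set. simple_graph {..<n} E \<and> alpha {..<n} E \<le> 3 \<and>
         (\<forall>\<C>. is_clique_cover {..<n} E \<C> \<longrightarrow>
              real (card \<C>) \<ge> (1/73984) * real n powr (6/5) / (log 2 (real n))^2)"
proof -
  define s where "s = real n powr (2/5)"
  define L where "L = ln (real n)"
  define k where "k = nat \<lceil>16 * s * L\<rceil>"
  define p where "p = 1 / (2 * s)"
  define x4 where "x4 = 4 * p ^ 6"
  define y where "y = 1 / (2 * real n ^ k)"
  note cd = conds[OF n8 s_def L_def k_def p_def x4_def y_def]
  obtain H where H: "H \<subseteq> prs {..<n}"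
    and H4: "\<forall>Q \<subseteq> {..<n}. card Q = 4 \<longrightarrow> \<not> prs Q \<subseteq> H"
    and Hk: "\<forall>Q \<subseteq> {..<n}. card Q = k \<longrightarrow> prs Q \<inter> H \<noteq> {}"
    using ramsey_graph[OF cd(3) cd(5) cd(6) cd(7) cd(8) cd(9) cd(10) cd(11) cd(12)] by blast
  define V :: "nat set" where "V = {..<n}"
  define E where "E = prs V - H"
  have finV: "finite V" and cardV: "card V = n" by (auto simp: V_def)
  have sg: "simple_graph V E" unfolding simple_graph_def E_def prs_def V_def by auto
  have stab: "card S \<le> 3" if st: "is_stable V E S" for S
  proof (rule ccontr)
    assume "\<not> card S \<le> 3"
    then have "4 \<le> card S" by simp
    then obtain Q where Q: "Q \<subseteq> S" "card Q = 4" using obtain_subset_with_card_n by metis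
    have SV: "S \<subseteq> V" using st by (simp add: is_stable_def)
    have QV: "Q \<subseteq> {..<n}" using Q SV by (auto simp: V_def)
    have "prs Q \<subseteq> H"
    proof
      fix e assume e: "e \<in> prs Q"
      then have "e \<subseteq> Q" "card e = 2" by (auto simp: prs_def)
      then obtain u v where uv: "e = {u, v}" "u \<noteq> v" by (auto simp: card_2_iff)
      have "u \<in> S" "v \<in> S" using uv \<open>e \<subseteq> Q\<close> Q by auto
      then have "{u, v} \<notin> E" using st by (simp add: is_stable_def)
      moreover have "e \<in> prs V" using e Q SV prs_mono[of Q V] by auto
      ultimately show "e \<in> H" using uv by (auto simp: E_def)
    qed
    then show False using H4 QV Q by auto
  qed
  have alpha3: "alpha V E \<le> 3"
  proof -
    have fin: "finite {card S | S. is_stable V E S}"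
      by (rule finite_subset[of _ "{..3}"]) (use stab in auto)
    have ne: "{card S | S. is_stable V E S} \<noteq> {}"
    proof -
      have "is_stable V E {}" by (simp add: is_stable_def)
      then show ?thesis by blast
    qed
    show ?thesis unfolding alpha_def using Max_le_iff[OF fin ne] stab by auto
  qed
  have cover: "real (card \<C>) \<ge> (1/73984) * real n powr (6/5) / (log 2 (real n))^2"
    if cc: "is_clique_cover V E \<C>" for \<C>
  proof -
    have fC: "finite \<C>" and cl: "\<And>X. X \<in> \<C> \<Longrightarrow> is_clique V E X"
      and cov: "\<And>e. e \<in> E \<Longrightarrow> \<exists>X\<in>\<C>. e \<subseteq> X"
      using cc by (auto simp: is_clique_cover_def)
    have XV: "X \<subseteq> V" if "X \<in> \<C>" for X using cl[OF that] by (simp add: is_clique_def)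
    have cardX: "card X \<le> k" if X: "X \<in> \<C>" for X
    proof (rule ccontr)
      assume "\<not> card X \<le> k"
      then have "k \<le> card X" by simp
      then obtain Q where Q: "Q \<subseteq> X" "card Q = k" using obtain_subset_with_card_n by metis
      have QV: "Q \<subseteq> {..<n}" using Q XV[OF X] by (auto simp: V_def)
      then obtain e where e: "e \<in> prs Q" "e \<in> H" using Hk Q by blast
      then have "e \<subseteq> Q" "card e = 2" by (auto simp: prs_def)
      then obtain u v where uv: "e = {u, v}" "u \<noteq> v" by (auto simp: card_2_iff)
      have "u \<in> X" "v \<in> X" using uv \<open>e \<subseteq> Q\<close> Q by auto
      then have "{u, v} \<in> E" using cl[OF X] uv by (simp add: is_clique_def)
      then show False using e uv by (simp add: E_def)
    qed
    define F where "F = (\<lambda>X. {Q. Q \<subseteq> V \<and> card Q = 4 \<and> 2 \<le> card (Q \<inter> X)})"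
    have sub: "{Q. Q \<subseteq> V \<and> card Q = 4} \<subseteq> (\<Union>X\<in>\<C>. F X)"
    proof
      fix Q assume "Q \<in> {Q. Q \<subseteq> V \<and> card Q = 4}"
      then have Q: "Q \<subseteq> V" "card Q = 4" by auto
      have finQ: "finite Q" using Q finV finite_subset by auto
      have "\<not> prs Q \<subseteq> H" using H4 Q by (auto simp: V_def)
      then obtain e where e: "e \<in> prs Q" "e \<notin> H" by auto
      have "e \<in> prs V" using e Q prs_mono[of Q V] by auto
      then have "e \<in> E" using e by (simp add: E_def)
      then obtain X where X: "X \<in> \<C>" "e \<subseteq> X" using cov by blast
      have "e \<subseteq> Q \<inter> X" "card e = 2" using e X by (auto simp: prs_def)
      then have "2 \<le> card (Q \<inter> X)" using finQ by (metis card_mono finite_Int)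
      then show "Q \<in> (\<Union>X\<in>\<C>. F X)" using X Q by (auto simp: F_def)
    qed
    have finU: "finite (\<Union>X\<in>\<C>. F X)"
      by (rule finite_subset[of _ "Pow V"]) (use finV in \<open>auto simp: F_def\<close>)
    have "n choose 4 = card {Q. Q \<subseteq> V \<and> card Q = 4}" using n_subsets[OF finV, of 4] cardV by simp
    also have "\<dots> \<le> card (\<Union>X\<in>\<C>. F X)" by (rule card_mono[OF finU sub])
    also have "\<dots> \<le> (\<Sum>X\<in>\<C>. card (F X))" by (rule card_UN_le[OF fC])
    also have "\<dots> \<le> (\<Sum>X\<in>\<C>. k ^ 2 * n ^ 2)"
    proof (rule sum_mono)
      fix X assume X: "X \<in> \<C>"
      have "card (F X) \<le> card X ^ 2 * card V ^ 2" unfolding F_def by (rule count4[OF finV XV[OF X]])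
      also have "\<dots> \<le> k ^ 2 * n ^ 2" using cardX[OF X] cardV by (simp add: power_mono)
      finally show "card (F X) \<le> k ^ 2 * n ^ 2" .
    qed
    also have "\<dots> = card \<C> * k ^ 2 * n ^ 2" by simp
    finally have cnt: "n choose 4 \<le> card \<C> * k ^ 2 * n ^ 2" .
    have "(real n / real 4) ^ 4 \<le> real (n choose 4)"
      using n8 by (intro binomial_ge_n_over_k_pow_k) auto
    also have "\<dots> \<le> real (card \<C>) * real k ^ 2 * real n ^ 2"
      using cnt by (metis of_nat_le_iff of_nat_mult of_nat_power)
    finally have mainr: "(real n / 4) ^ 4 \<le> real (card \<C>) * real k ^ 2 * real n ^ 2" by simp
    show ?thesis
      by (rule final_num[OF _ s_def L_def cd(2) _ cd(4) mainr]) (use n8 in auto)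
  qed
  show ?thesis using sg alpha3 cover unfolding V_def by blast
qed

theorem mainTheorem1:
  shows "\<exists>C::real. C > 0 \<and>
    infinite {n::nat. n > 0 \<and>
      (\<exists>E :: nat set set. simple_graph {..<n} E \<and> alpha {..<n} E \<le> 3 \<and>
         (\<forall>\<C>. is_clique_cover {..<n} E \<C> \<longrightarrow>
              real (card \<C>) \<ge> C * real n powr (6/5) / (log 2 (real n))^2))}"
proof (intro exI[of _ "1/73984"] conjI)
  show "(0::real) < 1/73984" by simp
  have "{8::nat..} \<subseteq> {n::nat. n > 0 \<and>
      (\<exists>E :: nat set set. simple_graph {..<n} E \<and> alpha {..<n} E \<le> 3 \<and>
         (\<forall>\<C>. is_clique_cover {..<n} E \<C> \<longrightarrow>
              real (card \<C>) \<ge> (1/73984) * real n powr (6/5) / (log 2 (real n))^2))}"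
    using main_n by auto
  moreover have "infinite {8::nat..}" by (rule infinite_Ici)
  ultimately show "infinite {n::nat. n > 0 \<and>
      (\<exists>E :: nat set set. simple_graph {..<n} E \<and> alpha {..<n} E \<le> 3 \<and>
         (\<forall>\<C>. is_clique_cover {..<n} E \<C> \<longrightarrow>
              real (card \<C>) \<ge> (1/73984) * real n powr (6/5) / (log 2 (real n))^2))}"
    using infinite_super by blast
qed

end
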